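(* Let $\{P^{[s,t]}_{ij,k}\}$, with initial point $x^{(0)}\in S$, be a discrete time quadratic stochastic process of type (A) or of type (B). For $x\in S$ and $m<n$ let $R^{m,n}_{ij}(x)=\sum_{l=1}^\infty P^{[m,n]}_{il,j}x_l$. The following are equivalent: (i) the q.s.p. satisfies the ergodic principle, i.e. $\lim_{n\to\infty}|P^{[m,n]}_{ij,k}-P^{[m,n]}_{uv,k}|=0$ for all $i,j,u,v,k,m\in\mathbb{N}$; (ii) for every $x\in S$ and every $i,j,k,m\in\mathbb{N}$, $\lim_{n\to\infty}|R^{m,n}_{ik}(x)-R^{m,n}_{jk}(x)|=0$.
   Context: $\mathbb{N}=\{1,2,\dots\}$; times are nonnegative integers. $\ell^1$ is the space of real sequences $x=(x_n)_{n\in\mathbb{N}}$ with $\|x\|_1=\sum_n|x_n|<\infty$, and $S=\{x\in\ell^1:x_n\ge0,\ \|x\|_1=1\}$. A discrete time quadratic stochastic process (q.s.p.) consists of an initial point $x^{(0)}\in S$ and numbers $P^{[s,t]}_{ij,k}$ ($i,j,k\in\mathbb{N}$; $s,t$ nonnegative integers with $t-s\ge1$) such that for all $s,t$: (1) $P^{[s,t]}_{ij,k}=P^{[s,t]}_{ji,k}$; (2) $P^{[s,t]}_{ij,k}\ge0$ and $\sum_{k}P^{[s,t]}_{ij,k}=1$; and (3) one of the following holds for all $s<r<t$: type (A): $P^{[s,t]}_{ij,k}=\sum_{m,l}P^{[s,r]}_{ij,m}P^{[r,t]}_{ml,k}x^{(r)}_l$; type (B): $P^{[s,t]}_{ij,k}=\sum_{m,l,g,h}P^{[s,r]}_{im,l}P^{[s,r]}_{jg,h}P^{[r,t]}_{lh,k}x^{(s)}_mx^{(s)}_g$.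 Here for $r\ge1$, $x^{(r)}_k=\sum_{i,j}P^{[0,r]}_{ij,k}x^{(0)}_ix^{(0)}_j$. *)

theory Defs
  imports "HOL-Analysis.Analysis"
begin

text \<open>Conventions: states (elements of the paper's index set N = {1,2,...}) are natural
numbers \<open>\<ge> 1\<close>; the value at index 0 is never used.
The family P^{[s,t]}_{ij,k} is encoded as \<open>P s t i j k\<close>; its values for \<open>t \<le> s\<close> are irrelevant.\<close>

definition stoch_S :: "(nat \<Rightarrow> real) set" where
  "stoch_S = {x. (\<forall>n\<ge>1. 0 \<le> x n) \<and> (x has_sum 1) (atLeast 1)}"

definition traj :: "(nat \<Rightarrow> nat \<Rightarrow> nat \<Rightarrow> nat \<Rightarrow> nat \<Rightarrow> real) \<Rightarrow> (nat \<Rightarrow> real) \<Rightarrow> nat \<Rightarrow> nat \<Rightarrow> real" where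
  "traj P x0 r k = (if r = 0 then x0 k
     else (\<Sum>\<^sub>\<infinity>(i,j)\<in>(atLeast 1)\<times>(atLeast 1). P 0 r i j k * x0 i * x0 j))"

definition qsp_base :: "(nat \<Rightarrow> nat \<Rightarrow> nat \<Rightarrow> nat \<Rightarrow> nat \<Rightarrow> real) \<Rightarrow> (nat \<Rightarrow> real) \<Rightarrow> bool" where
  "qsp_base P x0 \<longleftrightarrow> x0 \<in> stoch_S \<and>
     (\<forall>s t i j k. s < t \<and> 1 \<le> i \<and> 1 \<le> j \<and> 1 \<le> k \<longrightarrow>
        P s t i j k = P s t j i k \<and> 0 \<le> P s t i j k) \<and>
     (\<forall>s t i j. s < t \<and> 1 \<le> i \<and> 1 \<le> j \<longrightarrow> ((\<lambda>k. P s t i j k) has_sum 1) (atLeast 1))"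

definition qsp_typeA :: "(nat \<Rightarrow> nat \<Rightarrow> nat \<Rightarrow> nat \<Rightarrow> nat \<Rightarrow> real) \<Rightarrow> (nat \<Rightarrow> real) \<Rightarrow> bool" where
  "qsp_typeA P x0 \<longleftrightarrow>
     (\<forall>s r t i j k. s < r \<and> r < t \<and> 1 \<le> i \<and> 1 \<le> j \<and> 1 \<le> k \<longrightarrow>
        ((\<lambda>(m,l). P s r i j m * P r t m l k * traj P x0 r l) has_sum P s t i j k)
          ((atLeast 1) \<times> (atLeast 1)))"

definition qsp_typeB :: "(nat \<Rightarrow> nat \<Rightarrow> nat \<Rightarrow> nat \<Rightarrow> nat \<Rightarrow> real) \<Rightarrow> (nat \<Rightarrow> real) \<Rightarrow> bool" where
  "qsp_typeB P x0 \<longleftrightarrow>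
     (\<forall>s r t i j k. s < r \<and> r < t \<and> 1 \<le> i \<and> 1 \<le> j \<and> 1 \<le> k \<longrightarrow>
        ((\<lambda>(m,l,g,h). P s r i m l * P s r j g h * P r t l h k * traj P x0 s m * traj P x0 s g)
           has_sum P s t i j k) ((atLeast 1) \<times> (atLeast 1) \<times> (atLeast 1) \<times> (atLeast 1)))"

definition Rmat :: "(nat \<Rightarrow> nat \<Rightarrow> nat \<Rightarrow> nat \<Rightarrow> nat \<Rightarrow> real) \<Rightarrow> nat \<Rightarrow> nat \<Rightarrow> nat \<Rightarrow> nat \<Rightarrow> (nat \<Rightarrow> real) \<Rightarrow> real" where
  "Rmat P m n i j x = (\<Sum>\<^sub>\<infinity>l\<in>(atLeast 1). P m n i l j * x l)"

end

theory Submission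
  imports Defs
begin

lemma P_le1:
  assumes "qsp_base P x0" "s < t" "1 \<le> i" "1 \<le> j" "1 \<le> k"
  shows "P s t i j k \<le> 1" "0 \<le> P s t i j k"
proof -
  have hs: "((\<lambda>k. P s t i j k) has_sum 1) (atLeast 1)"
    using assms unfolding qsp_base_def by blast
  have nn: "\<And>k. 1 \<le> k \<Longrightarrow> 0 \<le> P s t i j k"
    using assms unfolding qsp_base_def by blast
  have fin: "((\<lambda>l. P s t i j l) has_sum P s t i j k) {k}"
    by (rule has_sum_finiteI) simp_all
  show "P s t i j k \<le> 1"
  proof (rule has_sum_mono_neutral[OF fin hs])
    fix l assume "l \<in> {k} - atLeast 1" then show "P s t i j l \<le> 0" using assms(5) by simp
  next
    fix l assume "l \<in> atLeast 1 - {k}" then show "0 \<le> P s t i j l" using nn by simp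
  qed simp
  show "0 \<le> P s t i j k" using nn assms(5) by simp
qed

lemma delta_hs:
  assumes "1 \<le> v"
  shows "((\<lambda>l. f l * (if l = v then 1 else 0)) has_sum (f v :: real)) (atLeast 1)"
proof -
  have fin: "((\<lambda>l. f l * (if l = v then 1 else 0)) has_sum f v) {v}"
    by (rule has_sum_finiteI) simp_all
  show ?thesis
    by (rule has_sum_cong_neutral[THEN iffD1, OF _ _ _ fin]) (use assms in auto)
qed

lemma delta_S: "1 \<le> v \<Longrightarrow> (\<lambda>l. if l = v then 1 else 0) \<in> stoch_S"
  unfolding stoch_S_def using delta_hs[of v "\<lambda>_. 1"] by simp

lemma Rmat_delta:
  assumes "1 \<le> v"
  shows "Rmat P m n i k (\<lambda>l. if l = v then 1 else 0) = P m n i v k"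
  unfolding Rmat_def by (rule infsumI[OF delta_hs[OF assms]])

theorem proposition2p5:
  fixes P :: "nat \<Rightarrow> nat \<Rightarrow> nat \<Rightarrow> nat \<Rightarrow> nat \<Rightarrow> real" and x0 :: "nat \<Rightarrow> real"
  assumes "qsp_base P x0"
    and "qsp_typeA P x0 \<or> qsp_typeB P x0"
  shows "(\<forall>i j u v k m. 1 \<le> i \<and> 1 \<le> j \<and> 1 \<le> u \<and> 1 \<le> v \<and> 1 \<le> k \<and> 1 \<le> m \<longrightarrow>
            (\<lambda>n. \<bar>P m n i j k - P m n u v k\<bar>) \<longlonglongrightarrow> 0)
     \<longleftrightarrow> (\<forall>x\<in>stoch_S. \<forall>i j k m. 1 \<le> i \<and> 1 \<le> j \<and> 1 \<le> k \<and> 1 \<le> m \<longrightarrow>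
            (\<lambda>n. \<bar>Rmat P m n i k x - Rmat P m n j k x\<bar>) \<longlonglongrightarrow> 0)"
proof
  assume H: "\<forall>i j u v k m. 1 \<le> i \<and> 1 \<le> j \<and> 1 \<le> u \<and> 1 \<le> v \<and> 1 \<le> k \<and> 1 \<le> m \<longrightarrow>
            (\<lambda>n. \<bar>P m n i j k - P m n u v k\<bar>) \<longlonglongrightarrow> 0"
  show "\<forall>x\<in>stoch_S. \<forall>i j k m. 1 \<le> i \<and> 1 \<le> j \<and> 1 \<le> k \<and> 1 \<le> m \<longrightarrow>
            (\<lambda>n. \<bar>Rmat P m n i k x - Rmat P m n j k x\<bar>) \<longlonglongrightarrow> 0"
  proof (intro ballI allI impI)
    fix x :: "nat \<Rightarrow> real" and i j k m :: nat
    assume xS: "x \<in> stoch_S" and ij: "1 \<le> i \<and> 1 \<le> j \<and> 1 \<le> k \<and> 1 \<le> m"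
    have xS': "(\<forall>n\<ge>1. 0 \<le> x n) \<and> (x has_sum 1) (atLeast 1)"
      using xS unfolding stoch_S_def by simp
    have xnn: "\<And>l. 1 \<le> l \<Longrightarrow> 0 \<le> x l" using xS' by simp
    have xhs: "(x has_sum 1) (atLeast 1)" using xS' by simp
    have xsum: "x summable_on atLeast 1" using xhs by (auto simp: summable_on_def)
    define g where "g n l = (if 1 \<le> l then (P m n i l k - P m n j l k) * x l else 0)" for n l
    define M where "M l = (if 1 \<le> l then x l else 0)" for l
    have Msum: "summable M"
    proof -
      have "(M has_sum 1) UNIV"
        using has_sum_cong_neutral[of UNIV "atLeast 1" M x] xhs by (simp add: M_def)
      then show ?thesis by (rule sums_summable[OF has_sum_imp_sums])
    qed
    have eqn: "Rmat P m n i k x - Rmat P m n j k x = suminf (g n)" if "m < n" for n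
    proof -
      have s1: "((\<lambda>l. P m n a l k * x l) has_sum Rmat P m n a k x) (atLeast 1)" if "1 \<le> a" for a
      proof -
        have "(\<lambda>l. P m n a l k * x l) summable_on atLeast 1"
        proof (rule summable_on_comparison_test[OF xsum])
          fix l :: nat assume "l \<in> atLeast 1"
          then have l: "1 \<le> l" by simp
          have p: "0 \<le> P m n a l k" "P m n a l k \<le> 1"
            using P_le1[OF assms(1) \<open>m < n\<close> that l] ij by auto
          show "P m n a l k * x l \<le> x l" by (rule mult_left_le_one_le[OF xnn[OF l] p(1) p(2)])
          show "0 \<le> P m n a l k * x l" by (rule mult_nonneg_nonneg[OF p(1) xnn[OF l]])
        qed
        then show ?thesis unfolding Rmat_def by (rule has_sum_infsum)
      qed
      have hi: "((\<lambda>l. P m n i l k * x l) has_sum Rmat P m n i k x) (atLeast 1)" using s1[of i] ij by simp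
      have hj: "((\<lambda>l. - (P m n j l k * x l)) has_sum - Rmat P m n j k x) (atLeast 1)"
      proof (rule has_sum_uminus[THEN iffD2])
        show "((\<lambda>l. P m n j l k * x l) has_sum - (- Rmat P m n j k x)) (atLeast 1)"
          using s1[of j] ij by simp
      qed
      have "((\<lambda>l. P m n i l k * x l + - (P m n j l k * x l)) has_sum
            (Rmat P m n i k x + - Rmat P m n j k x)) (atLeast 1)"
        by (rule has_sum_add[OF hi hj])
      hence "(g n has_sum (Rmat P m n i k x - Rmat P m n j k x)) UNIV"
        using has_sum_cong_neutral[of UNIV "atLeast 1" "g n"
            "(\<lambda>l. P m n i l k * x l + - (P m n j l k * x l))"]
        by (simp add: g_def left_diff_distrib)
      hence "g n sums (Rmat P m n i k x - Rmat P m n j k x)" by (rule has_sum_imp_sums)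
      then show ?thesis by (simp add: sums_iff)
    qed
    have lim0: "(\<lambda>n. g n l) \<longlonglongrightarrow> 0" for l
    proof (cases "1 \<le> l")
      case True
      have "(\<lambda>n. \<bar>P m n i l k - P m n j l k\<bar>) \<longlonglongrightarrow> 0"
        by (rule H[rule_format]) (use ij True in simp)
      hence "(\<lambda>n. P m n i l k - P m n j l k) \<longlonglongrightarrow> 0"
        by (simp only: tendsto_rabs_zero_iff)
      hence "(\<lambda>n. (P m n i l k - P m n j l k) * x l) \<longlonglongrightarrow> 0 * x l"
        by (intro tendsto_mult tendsto_const)
      then show ?thesis using True by (simp add: g_def)
    qed (simp add: g_def)
    have bound: "eventually (\<lambda>(l,n). norm (g n l) \<le> M l) (at_top \<times>\<^sub>F sequentially)"
      unfolding eventually_prod_filter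
    proof (intro exI conjI allI impI)
      show "eventually (\<lambda>_. True) at_top" by simp
      show "eventually (\<lambda>n. m < n) sequentially" by (rule eventually_gt_at_top)
      fix l n :: nat assume "True" and mn: "m < n"
      show "case (l, n) of (l, n) \<Rightarrow> norm (g n l) \<le> M l"
      proof (cases "1 \<le> l")
        case True
        have a: "0 \<le> P m n i l k" "P m n i l k \<le> 1" using P_le1[OF assms(1) mn, of i l k] ij True by auto
        have b: "0 \<le> P m n j l k" "P m n j l k \<le> 1" using P_le1[OF assms(1) mn, of j l k] ij True by auto
        have "\<bar>P m n i l k - P m n j l k\<bar> \<le> 1" using a b by linarith
        hence "\<bar>P m n i l k - P m n j l k\<bar> * x l \<le> 1 * x l"
          by (rule mult_right_mono[OF _ xnn[OF True]])
        then show ?thesis using True xnn[OF True] by (simp add: g_def M_def abs_mult)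
      qed (simp add: g_def M_def)
    qed
    have "(\<lambda>n. suminf (g n)) \<longlonglongrightarrow> suminf (\<lambda>l. 0::real)"
      using tannerys_theorem[of "\<lambda>l n. g n l" "\<lambda>l. 0" sequentially M, OF lim0 bound Msum] by simp
    hence "(\<lambda>n. suminf (g n)) \<longlonglongrightarrow> 0" by simp
    hence "(\<lambda>n. Rmat P m n i k x - Rmat P m n j k x) \<longlonglongrightarrow> 0"
    proof (rule Lim_transform_eventually)
      show "\<forall>\<^sub>F n in sequentially. suminf (g n) = Rmat P m n i k x - Rmat P m n j k x"
        using eventually_gt_at_top[of m] by (rule eventually_mono) (simp add: eqn)
    qed
    then show "(\<lambda>n. \<bar>Rmat P m n i k x - Rmat P m n j k x\<bar>) \<longlonglongrightarrow> 0"
      by (simp only: tendsto_rabs_zero_iff)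
  qed
next
  assume H: "\<forall>x\<in>stoch_S. \<forall>i j k m. 1 \<le> i \<and> 1 \<le> j \<and> 1 \<le> k \<and> 1 \<le> m \<longrightarrow>
            (\<lambda>n. \<bar>Rmat P m n i k x - Rmat P m n j k x\<bar>) \<longlonglongrightarrow> 0"
  have base: "\<forall>s t i j k. s < t \<and> 1 \<le> i \<and> 1 \<le> j \<and> 1 \<le> k \<longrightarrow>
        P s t i j k = P s t j i k \<and> 0 \<le> P s t i j k"
    using assms(1) unfolding qsp_base_def by (rule conjunct1[OF conjunct2])
  have sym: "P s t i j k = P s t j i k" if "s < t" "1 \<le> i" "1 \<le> j" "1 \<le> k" for s t i j k
    using base[rule_format, of s t i j k] that by simp
  have D: "(\<lambda>n. P m n i v k - P m n j v k) \<longlonglongrightarrow> 0"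
    if "1 \<le> i" "1 \<le> j" "1 \<le> v" "1 \<le> k" "1 \<le> m" for i j v k m
  proof -
    have "(\<lambda>n. \<bar>Rmat P m n i k (\<lambda>l. if l = v then 1 else 0) - Rmat P m n j k (\<lambda>l. if l = v then 1 else 0)\<bar>) \<longlonglongrightarrow> 0"
      by (rule H[rule_format, OF delta_S[OF that(3)]]) (use that in simp)
    then show ?thesis unfolding Rmat_delta[OF that(3)] by (simp only: tendsto_rabs_zero_iff)
  qed
  show "\<forall>i j u v k m. 1 \<le> i \<and> 1 \<le> j \<and> 1 \<le> u \<and> 1 \<le> v \<and> 1 \<le> k \<and> 1 \<le> m \<longrightarrow>
            (\<lambda>n. \<bar>P m n i j k - P m n u v k\<bar>) \<longlonglongrightarrow> 0"
  proof (intro allI impI)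
    fix i j u v k m :: nat assume c: "1 \<le> i \<and> 1 \<le> j \<and> 1 \<le> u \<and> 1 \<le> v \<and> 1 \<le> k \<and> 1 \<le> m"
    have d1: "(\<lambda>n. P m n i j k - P m n u j k) \<longlonglongrightarrow> 0" by (rule D) (use c in simp_all)
    have d2: "(\<lambda>n. P m n j u k - P m n v u k) \<longlonglongrightarrow> 0" by (rule D) (use c in simp_all)
    have "(\<lambda>n. (P m n i j k - P m n u j k) + (P m n j u k - P m n v u k)) \<longlonglongrightarrow> 0"
      using tendsto_add[OF d1 d2] by simp
    hence "(\<lambda>n. P m n i j k - P m n u v k) \<longlonglongrightarrow> 0"
    proof (rule Lim_transform_eventually)
      show "\<forall>\<^sub>F n in sequentially. (P m n i j k - P m n u j k) + (P m n j u k - P m n v u k)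
            = P m n i j k - P m n u v k"
        using eventually_gt_at_top[of m]
      proof (rule eventually_mono)
        fix n assume mn: "m < n"
        have e1: "P m n u j k = P m n j u k" by (rule sym) (use mn c in simp_all)
        have e2: "P m n u v k = P m n v u k" by (rule sym) (use mn c in simp_all)
        show "(P m n i j k - P m n u j k) + (P m n j u k - P m n v u k)
            = P m n i j k - P m n u v k" unfolding e1 e2 by simp
      qed
    qed
    then show "(\<lambda>n. \<bar>P m n i j k - P m n u v k\<bar>) \<longlonglongrightarrow> 0"
      by (simp only: tendsto_rabs_zero_iff)
  qed
qed

end
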